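(* Let $1\le r\le n$, let $\mathcal{A}$ be a family of $r$-element subsets of $[n]$, and let $m$ be defined on $\mathcal{A}$ by: $m(A)=n/r$ if $A$ is contained in some matching of $\lfloor n/r\rfloor$ sets from $\mathcal{A}$, and otherwise $m(A)$ is the size of the largest matching of sets from $\mathcal{A}$ containing $A$. Let $\sigma$ be a cyclic permutation of $[n]$ and let $\mathcal{A}^\sigma$ be the collection of sets in $\mathcal{A}$ that are intervals in $\sigma$. Then \[ \sum_{A\in\mathcal{A}^\sigma}\frac{1}{m(A)}\le r. \]
   Context: A matching is a collection of pairwise disjoint sets. A cyclic permutation $\sigma$ of $[n]$ is a cyclic ordering $a_1<a_2<\dots<a_n<a_1$ of the elements of $[n]$. A set is an interval in $\sigma$ if its elements are consecutive in this cyclic order. *)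

theory Defs
  imports Complex_Main
begin

definition matching :: "'a set set \<Rightarrow> bool" where
  "matching M \<longleftrightarrow> (\<forall>A\<in>M. \<forall>B\<in>M. A \<noteq> B \<longrightarrow> A \<inter> B = {})"

definition m_weight :: "nat \<Rightarrow> nat \<Rightarrow> nat set set \<Rightarrow> nat set \<Rightarrow> real" where
  "m_weight n r F A =
     (if \<exists>M. M \<subseteq> F \<and> matching M \<and> A \<in> M \<and> card M = n div r
      then real n / real r
      else real (Max {card M | M. M \<subseteq> F \<and> matching M \<and> A \<in> M}))"

text \<open>A cyclic permutation of [n] is represented by a list xs enumerating [n] in the cyclic
  order (xs!0 < xs!1 < ... < xs!(n-1) < xs!0).\<close>
definition cyc_interval :: "nat list \<Rightarrow> nat set \<Rightarrow> bool" where
  "cyc_interval xs S \<longleftrightarrow>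
     (\<exists>i < length xs. \<exists>k \<le> length xs. S = {xs ! ((i + j) mod length xs) | j. j < k})"

end

theory Submission imports Defs begin

lemma sorted_gap:
  fixes L :: "nat list"
  assumes "sorted_wrt (<) L" "a + d < length L"
  shows "L ! a + d \<le> L ! (a + d)"
  using assms(2)
proof (induction d)
  case 0 then show ?case by simp
next
  case (Suc d)
  then have "L ! a + d \<le> L ! (a + d)" by simp
  moreover have "L ! (a + d) < L ! (a + Suc d)"
    using sorted_wrt_nth_less[OF assms(1)] Suc.prems by simp
  ultimately show ?case by simp
qed

lemma I_disj:
  assumes "distinct xs" "n = length xs" "x < n" "y < n" "x + r \<le> y" "y + r \<le> x + n"
  shows "{xs ! ((x + j) mod n) | j. j < r} \<inter> {xs ! ((y + j) mod n) | j. j < r} = {}"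
proof (rule ccontr)
  assume "\<not> ?thesis"
  then obtain j j' where j: "j < r" "j' < r" and eq: "xs ! ((x + j) mod n) = xs ! ((y + j') mod n)"
    by blast
  have n0: "n > 0" using assms(3) by simp
  have "(x + j) mod n = (y + j') mod n"
    using eq assms(1,2) n0 nth_eq_iff_index_eq by (metis mod_less_divisor)
  moreover have "(x + j) mod n = x + j" using assms j by simp
  moreover have "(y + j') mod n = (if y + j' < n then y + j' else y + j' - n)"
  proof (cases "y + j' < n")
    case True then show ?thesis by simp
  next
    case False
    then have "y + j' - n < n" using assms j by linarith
    then show ?thesis using False by (simp add: mod_if)
  qed
  ultimately have "x + j = (if y + j' < n then y + j' else y + j' - n)" by simp
  then show False
  proof (cases "y + j' < n")
    case True
    with \<open>x + j = _\<close> have "x + j = y + j'" by simp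
    then show False using assms j by linarith
  next
    case False
    with \<open>x + j = _\<close> have "x + j = y + j' - n" by simp
    then show False using assms j False by linarith
  qed
qed

lemma card_I:
  assumes "distinct xs" "n = length xs" "k \<le> n"
  shows "card {xs ! ((i + j) mod n) | j. j < k} = k"
proof -
  have n0: "k > 0 \<Longrightarrow> n > 0" using assms(3) by simp
  have eq: "{xs ! ((i + j) mod n) | j. j < k} = (\<lambda>j. xs ! ((i + j) mod n)) ` {..<k}" by auto
  have "inj_on (\<lambda>j. xs ! ((i + j) mod n)) {..<k}"
  proof (rule inj_onI)
    fix a b assume ab: "a \<in> {..<k}" "b \<in> {..<k}" "xs ! ((i + a) mod n) = xs ! ((i + b) mod n)"
    then have "n > 0" using n0 by auto
    then have "(i + a) mod n = (i + b) mod n"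
      using ab(3) assms(1,2) nth_eq_iff_index_eq by (metis mod_less_divisor)
    moreover have "a < n" "b < n" using ab assms by auto
    ultimately show "a = b"
    proof (induction a b rule: linorder_wlog)
      case (le a b)
      then have "n dvd (i + b) - (i + a)" using mod_eq_dvd_iff_nat[of "i+a" "i+b" n] by simp
      then have "n dvd b - a" by simp
      then show "a = b" using le by (metis diff_less_mono2 dvd_imp_le le_antisym less_imp_diff_less not_less zero_less_diff diff_is_0_eq')
    next
      case (sym a b) then show ?case by simp
    qed
  qed
  then show ?thesis using eq card_image by fastforce
qed

lemma class_sep:
  fixes E :: "nat set"
  assumes "E \<subseteq> {..<n}" "card E = q * r" "r > 0"
    and "p < p'" "p' < q * r" "p mod r = p' mod r"
  defines "L \<equiv> sorted_list_of_set E"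
  shows "L ! p + r \<le> L ! p' \<and> L ! p' + r \<le> L ! p + n"
proof -
  have finE: "finite E" using assms(1) finite_subset by blast
  have sL: "sorted_wrt (<) L" unfolding L_def by simp
  have lenL: "length L = q * r" unfolding L_def using assms(2) by simp
  have setL: "set L = E" unfolding L_def using finE by simp
  have "r dvd p' - p" using mod_eq_dvd_iff_nat[of p p' r] assms(4,6) by simp
  then obtain m where m: "p' - p = r * m" by (elim dvdE)
  have m1: "m \<ge> 1" using m assms(4) by (cases m) auto
  have "r * m < r * q" using m assms(4,5) by (metis diff_le_self le_less_trans mult.commute)
  then have mq: "m < q" using assms(3) by simp
  have d1: "r \<le> p' - p" using m m1 by simp
  have "r * (m + 1) \<le> r * q" using mq by (intro mult_le_mono2) simp
  then have d2: "p' - p + r \<le> q * r" using m by (simp add: algebra_simps)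
  have g1: "L ! p + (p' - p) \<le> L ! p'"
    using sorted_gap[OF sL, of p "p' - p"] assms(4,5) lenL by simp
  have g2: "L ! p' + (q * r - 1 - p') \<le> L ! (q * r - 1)"
    using sorted_gap[OF sL, of p' "q * r - 1 - p'"] assms(4,5) lenL by simp
  have g3: "L ! 0 + p \<le> L ! p"
    using sorted_gap[OF sL, of 0 p] assms(4,5) lenL by simp
  have "L ! (q * r - 1) \<in> E" using setL lenL assms(5) nth_mem[of "q*r - 1" L] by simp
  then have "L ! (q * r - 1) < n" using assms(1) by auto
  then show ?thesis using g1 g2 g3 d1 d2 assms(4,5) by linarith
qed

lemma mw_ge:
  assumes "finite F" "A \<in> M" "M \<subseteq> F" "matching M" "card M \<le> n div r"
  shows "real (card M) \<le> m_weight n r F A"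
proof (cases "\<exists>M. M \<subseteq> F \<and> matching M \<and> A \<in> M \<and> card M = n div r")
  case True
  then have "m_weight n r F A = real n / real r" unfolding m_weight_def by simp
  moreover have "real (card M) \<le> real (n div r)" using assms(5) by simp
  moreover have "real (n div r) \<le> real n / real r" by (rule of_nat_div_le_of_nat)
  ultimately show ?thesis by linarith
next
  case False
  have eq: "m_weight n r F A = real (Max {card M | M. M \<subseteq> F \<and> matching M \<and> A \<in> M})"
    unfolding m_weight_def by (rule if_not_P[OF False])
  have fin: "finite {card M | M. M \<subseteq> F \<and> matching M \<and> A \<in> M}"
  proof (rule finite_subset)
    show "{card M | M. M \<subseteq> F \<and> matching M \<and> A \<in> M} \<subseteq> card ` Pow F" by auto
    show "finite (card ` Pow F)" using assms(1) by simp
  qed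
  have "card M \<in> {card M | M. M \<subseteq> F \<and> matching M \<and> A \<in> M}" using assms by auto
  then have "card M \<le> Max {card M | M. M \<subseteq> F \<and> matching M \<and> A \<in> M}"
    using fin by (rule Max_ge[rotated])
  then show ?thesis using eq by simp
qed

definition Iv :: "nat list \<Rightarrow> nat \<Rightarrow> nat \<Rightarrow> nat set" where
  "Iv xs r x = {xs ! ((x + j) mod length xs) | j. j < r}"

lemma Iv_mem: "r > 0 \<Longrightarrow> xs ! (x mod length xs) \<in> Iv xs r x"
  unfolding Iv_def by force

lemma cls_disj0:
  fixes E :: "nat set"
  assumes "distinct xs" "E \<subseteq> {..<length xs}" "card E = q * r" "r > 0"
    and "p < p'" "p' < q * r" "p mod r = p' mod r"
  shows "Iv xs r (sorted_list_of_set E ! p) \<inter> Iv xs r (sorted_list_of_set E ! p') = {}"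
proof -
  let ?L = "sorted_list_of_set E"
  have finE: "finite E" using assms(2) finite_subset by blast
  have lenL: "length ?L = q * r" using assms(3) by simp
  have "?L ! p \<in> E" "?L ! p' \<in> E" using lenL assms(5,6) finE
    by (metis less_trans nth_mem set_sorted_list_of_set)+
  then have lt: "?L ! p < length xs" "?L ! p' < length xs" using assms(2) by auto
  have "?L ! p + r \<le> ?L ! p' \<and> ?L ! p' + r \<le> ?L ! p + length xs"
    using class_sep[OF assms(2,3,4,5,6,7)] by simp
  then show ?thesis unfolding Iv_def using I_disj[OF assms(1) refl lt] by simp
qed

lemma cls_disj:
  fixes E :: "nat set"
  assumes "distinct xs" "E \<subseteq> {..<length xs}" "card E = q * r" "r > 0"
    and "p < q * r" "p' < q * r" "p mod r = p' mod r" "p \<noteq> p'"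
  shows "Iv xs r (sorted_list_of_set E ! p) \<inter> Iv xs r (sorted_list_of_set E ! p') = {}"
proof (cases "p < p'")
  case True
  then show ?thesis using cls_disj0[OF assms(1-4) True assms(6,7)] by simp
next
  case False
  then have "p' < p" using assms(8) by simp
  then show ?thesis using cls_disj0[OF assms(1-4) \<open>p' < p\<close> assms(5)] assms(7) by (simp add: Int_commute)
qed

lemma cls_match:
  fixes E :: "nat set"
  assumes "distinct xs" "E \<subseteq> {..<length xs}" "card E = q * r" "r > 0"
    and "T \<subseteq> {p. p < q * r \<and> p mod r = c}"
  shows "matching ((\<lambda>p. Iv xs r (sorted_list_of_set E ! p)) ` T)"
    and "inj_on (\<lambda>p. Iv xs r (sorted_list_of_set E ! p)) T"
proof -
  show "matching ((\<lambda>p. Iv xs r (sorted_list_of_set E ! p)) ` T)"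
    unfolding matching_def
  proof (intro ballI impI)
    fix A B assume AB: "A \<in> (\<lambda>p. Iv xs r (sorted_list_of_set E ! p)) ` T"
      "B \<in> (\<lambda>p. Iv xs r (sorted_list_of_set E ! p)) ` T" "A \<noteq> B"
    then obtain p p' where pp: "p \<in> T" "p' \<in> T" "A = Iv xs r (sorted_list_of_set E ! p)"
      "B = Iv xs r (sorted_list_of_set E ! p')" by blast
    then have "p \<noteq> p'" using AB(3) by blast
    moreover have "p < q * r" "p' < q * r" "p mod r = p' mod r" using pp(1,2) assms(5) by auto
    ultimately show "A \<inter> B = {}" using cls_disj[OF assms(1-4)] pp(3,4) by simp
  qed
  show "inj_on (\<lambda>p. Iv xs r (sorted_list_of_set E ! p)) T"
  proof (rule inj_onI, rule ccontr)
    fix p p' assume pp: "p \<in> T" "p' \<in> T"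
      "Iv xs r (sorted_list_of_set E ! p) = Iv xs r (sorted_list_of_set E ! p')" "p \<noteq> p'"
    moreover have "p < q * r" "p' < q * r" "p mod r = p' mod r" using pp(1,2) assms(5) by auto
    ultimately have "Iv xs r (sorted_list_of_set E ! p) \<inter> Iv xs r (sorted_list_of_set E ! p') = {}"
      using cls_disj[OF assms(1-4)] pp(4) by blast
    then show False using pp(3) Iv_mem[OF assms(4)] by blast
  qed
qed

lemma cls_eq:
  assumes "c < (r::nat)"
  shows "{p. p < q * r \<and> p mod r = c} = (\<lambda>k. c + k * r) ` {..<q}"
proof
  show "{p. p < q * r \<and> p mod r = c} \<subseteq> (\<lambda>k. c + k * r) ` {..<q}"
  proof
    fix p assume p: "p \<in> {p. p < q * r \<and> p mod r = c}"
    from p have pc: "p mod r = c" "p < q * r" by auto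
    have "p = c + (p div r) * r" using pc(1) mod_div_mult_eq[of p r] by linarith
    moreover have "p div r < q" using p by (simp add: less_mult_imp_div_less)
    ultimately show "p \<in> (\<lambda>k. c + k * r) ` {..<q}" by blast
  qed
  show "(\<lambda>k. c + k * r) ` {..<q} \<subseteq> {p. p < q * r \<and> p mod r = c}"
  proof
    fix p assume "p \<in> (\<lambda>k. c + k * r) ` {..<q}"
    then obtain k where k: "k < q" "p = c + k * r" by blast
    have "c + k * r < r + k * r" using assms by simp
    also have "\<dots> = (k + 1) * r" by simp
    also have "\<dots> \<le> q * r" using k(1) by (intro mult_le_mono1) simp
    finally show "p \<in> {p. p < q * r \<and> p mod r = c}" using k assms by simp
  qed
qed

lemma cls_card:
  assumes "c < (r::nat)"
  shows "card {p. p < q * r \<and> p mod r = c} = q"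
proof -
  have "inj_on (\<lambda>k. c + k * r) {..<q}" using assms by (intro inj_onI) simp
  then show ?thesis using cls_eq[OF assms] card_image by fastforce
qed

theorem lemma6:
  fixes n r :: nat and F :: "nat set set" and xs :: "nat list"
  assumes "1 \<le> r" and "r \<le> n"
    and "\<forall>A\<in>F. A \<subseteq> {1..n} \<and> card A = r"
    and "distinct xs" and "set xs = {1..n}"
  shows "(\<Sum>A\<in>{A\<in>F. cyc_interval xs A}. 1 / m_weight n r F A) \<le> real r"
proof -
  have lenx: "length xs = n" using distinct_card[OF assms(4)] assms(5) by simp
  have r0: "r > 0" using assms(1) by simp
  define q where "q = n div r"
  have qr: "q * r \<le> n" unfolding q_def by simp
  have q1: "q \<ge> 1" unfolding q_def using assms(1,2) div_greater_zero_iff[of n r] by simp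
  have finF: "finite F"
  proof (rule finite_subset)
    show "F \<subseteq> Pow {1..n}" using assms(3) by auto
  qed simp
  define I where "I x = Iv xs r x" for x
  define S where "S = {x. x < n \<and> I x \<in> F}"
  define g where "g A = 1 / m_weight n r F A" for A
  have finS: "finite S" unfolding S_def by simp
  have Sn: "S \<subseteq> {..<n}" unfolding S_def by auto
  have gnn: "g A \<ge> 0" for A
    unfolding g_def m_weight_def by simp
  have sub: "{A\<in>F. cyc_interval xs A} \<subseteq> I ` S"
  proof
    fix A assume A: "A \<in> {A\<in>F. cyc_interval xs A}"
    then obtain i k where ik: "i < n" "k \<le> n" "A = {xs ! ((i + j) mod n) | j. j < k}"
      unfolding cyc_interval_def lenx by blast
    have "card A = k" using card_I[OF assms(4) lenx[symmetric] ik(2)] ik(3) by simp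
    moreover have "card A = r" using A assms(3) by auto
    ultimately have "A = I i" using ik unfolding I_def Iv_def lenx by simp
    then show "A \<in> I ` S" using A ik(1) unfolding S_def by auto
  qed
  have "(\<Sum>A\<in>{A\<in>F. cyc_interval xs A}. 1 / m_weight n r F A) = (\<Sum>A\<in>{A\<in>F. cyc_interval xs A}. g A)"
    unfolding g_def by simp
  also have "\<dots> \<le> (\<Sum>A\<in>I ` S. g A)"
    using sub finS gnn by (intro sum_mono2) auto
  also have "\<dots> \<le> (\<Sum>x\<in>S. g (I x))"
    using sum_image_le[OF finS, of g I] gnn by (simp add: o_def)
  also have "\<dots> \<le> real r"
  proof (cases "card S \<le> q * r")
    case True
    have "q * r - card S \<le> card ({..<n} - S)" using card_Diff_subset[OF finS Sn] qr by simp
    then obtain T where T: "T \<subseteq> {..<n} - S" "card T = q * r - card S" "finite T"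
      by (rule obtain_subset_with_card_n)
    define E where "E = S \<union> T"
    have En: "E \<subseteq> {..<n}" unfolding E_def using Sn T by auto
    have cardE: "card E = q * r" unfolding E_def using T True finS
      by (subst card_Un_disjoint) auto
    have finE: "finite E" using En finite_subset by blast
    define L where "L = sorted_list_of_set E"
    have lenL: "length L = q * r" unfolding L_def using cardE by simp
    have setL: "set L = E" unfolding L_def using finE by simp
    have distL: "distinct L" unfolding L_def by simp
    define P where "P = {p. p < q * r \<and> L ! p \<in> S}"
    have finP: "finite P" unfolding P_def by simp
    have SP: "S = (\<lambda>p. L ! p) ` P"
    proof
      show "S \<subseteq> (\<lambda>p. L ! p) ` P"
      proof
        fix x assume "x \<in> S"
        then have "x \<in> set L" using setL E_def by auto
        then obtain p where "p < length L" "L ! p = x" by (metis in_set_conv_nth)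
        then show "x \<in> (\<lambda>p. L ! p) ` P" unfolding P_def using \<open>x \<in> S\<close> lenL by auto
      qed
    qed (auto simp: P_def)
    have injP: "inj_on (\<lambda>p. L ! p) P"
      using distL lenL unfolding P_def by (auto intro!: inj_onI simp: nth_eq_iff_index_eq)
    have "(\<Sum>x\<in>S. g (I x)) = (\<Sum>p\<in>P. g (I (L ! p)))"
      unfolding SP using sum.reindex[OF injP] by (simp add: o_def)
    also have "\<dots> = (\<Sum>c\<in>{..<r}. \<Sum>p\<in>{p. p \<in> P \<and> p mod r = c}. g (I (L ! p)))"
      using sum.group[OF finP finite_lessThan[of r], where g = "\<lambda>p. p mod r" and h = "\<lambda>p. g (I (L ! p))"] r0
      by (simp add: image_subset_iff)
    also have "\<dots> \<le> (\<Sum>c\<in>{..<r}. 1)"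
    proof (rule sum_mono)
      fix c assume c: "c \<in> {..<r}"
      define Tc where "Tc = {p. p \<in> P \<and> p mod r = c}"
      have TcC: "Tc \<subseteq> {p. p < q * r \<and> p mod r = c}" unfolding Tc_def P_def by auto
      have finTc: "finite Tc" using finP unfolding Tc_def by simp
      define M where "M = (\<lambda>p. I (L ! p)) ` Tc"
      have matchM: "matching M" unfolding M_def I_def L_def
        using cls_match(1)[OF assms(4) _ _ r0 TcC] En cardE lenx by simp
      have injM: "inj_on (\<lambda>p. I (L ! p)) Tc" unfolding I_def L_def
        using cls_match(2)[OF assms(4) _ _ r0 TcC] En cardE lenx by simp
      have cardM: "card M = card Tc" unfolding M_def using card_image[OF injM] .
      have cardTc: "card Tc \<le> q"
        using card_mono[OF _ TcC] cls_card[of c r q] c by simp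
      have MF: "M \<subseteq> F" unfolding M_def Tc_def P_def S_def by auto
      show "(\<Sum>p\<in>{p. p \<in> P \<and> p mod r = c}. g (I (L ! p))) \<le> 1"
      proof (cases "Tc = {}")
        case True
        then have "{p. p \<in> P \<and> p mod r = c} = {}" unfolding Tc_def .
        then show ?thesis by (simp only: sum.empty)
      next
        case False
        then have ct: "card Tc > 0" using finTc by (simp add: card_gt_0_iff)
        have "g (I (L ! p)) \<le> 1 / real (card Tc)" if p: "p \<in> Tc" for p
        proof -
          have "real (card M) \<le> m_weight n r F (I (L ! p))"
            using mw_ge[OF finF _ MF matchM] p cardM cardTc unfolding M_def q_def by auto
          then have "real (card Tc) \<le> m_weight n r F (I (L ! p))" using cardM by simp
          then show ?thesis unfolding g_def using ct by (simp add: frac_le)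
        qed
        then have "(\<Sum>p\<in>Tc. g (I (L ! p))) \<le> (\<Sum>p\<in>Tc. 1 / real (card Tc))"
          by (intro sum_mono) auto
        also have "\<dots> = 1" using ct by simp
        finally show ?thesis unfolding Tc_def .
      qed
    qed
    also have "\<dots> = real r" by simp
    finally show ?thesis .
  next
    case False
    have "g (I x) = real r / real n" if x: "x \<in> S" for x
    proof -
      have "card (S - {x}) \<ge> q * r - 1" using False x finS by simp
      then obtain T where T: "T \<subseteq> S - {x}" "card T = q * r - 1" "finite T"
        by (rule obtain_subset_with_card_n)
      define E where "E = insert x T"
      have qr1: "q * r \<ge> 1" using q1 r0 by simp
      have ES: "E \<subseteq> S" unfolding E_def using T x by auto
      have En: "E \<subseteq> {..<n}" using ES Sn by auto
      have "x \<notin> T" using T by auto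
      then have "card E = Suc (card T)" unfolding E_def using T(3) by simp
      then have cardE: "card E = q * r" using T(2) qr1 by linarith
      have finE: "finite E" using En finite_subset by blast
      define L where "L = sorted_list_of_set E"
      have lenL: "length L = q * r" unfolding L_def using cardE by simp
      have setL: "set L = E" unfolding L_def using finE by simp
      have "x \<in> set L" using setL E_def by auto
      then obtain p where p: "p < q * r" "L ! p = x" using lenL by (metis in_set_conv_nth)
      define Tc where "Tc = {p'. p' < q * r \<and> p' mod r = p mod r}"
      have TcC: "Tc \<subseteq> {p'. p' < q * r \<and> p' mod r = p mod r}" unfolding Tc_def by simp
      define M where "M = (\<lambda>p. I (L ! p)) ` Tc"
      have matchM: "matching M" unfolding M_def I_def L_def
        using cls_match(1)[OF assms(4) _ _ r0 TcC] En cardE lenx by simp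
      have injM: "inj_on (\<lambda>p. I (L ! p)) Tc" unfolding I_def L_def
        using cls_match(2)[OF assms(4) _ _ r0 TcC] En cardE lenx by simp
      have cardTc: "card Tc = q" unfolding Tc_def using cls_card[of "p mod r" r q] r0 by simp
      have cardM: "card M = n div r" unfolding M_def using card_image[OF injM] cardTc q_def by simp
      have "L ! p' \<in> E" if "p' \<in> Tc" for p'
        using that lenL setL unfolding Tc_def by (metis mem_Collect_eq nth_mem)
      then have MF: "M \<subseteq> F" unfolding M_def using ES unfolding S_def by auto
      have xM: "I x \<in> M" unfolding M_def Tc_def using p by auto
      have "m_weight n r F (I x) = real n / real r"
        unfolding m_weight_def using MF matchM xM cardM by auto
      then show ?thesis unfolding g_def by simp
    qed
    then have "(\<Sum>x\<in>S. g (I x)) = real (card S) * (real r / real n)" by simp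
    also have "\<dots> \<le> real n * (real r / real n)"
      using card_mono[OF _ Sn] by (intro mult_right_mono) auto
    also have "\<dots> \<le> real r" by simp
    finally show ?thesis .
  qed
  finally show ?thesis .
qed

end
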